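(* Let $a\in[0,\infty)$ and let $t:[0,1]\to[0,\infty]$ and $s:[0,\infty]\to[0,1]$ be continuous and increasing functions such that $G_{t,s}(x,y)=s(t(x)+t(y))$ defines a grouping function $G_{t,s}:[0,1]^2\to[0,1]$ having $0$ as neutral element (i.e. $G_{t,s}(x,0)=x$ for all $x\in[0,1]$). If $t(x)=\frac{a}{2}$ holds if and only if $x=0$, then $G_{t,s}$ is associative.
   Context: "Increasing" means non-decreasing. Arithmetic in $[0,\infty]$ uses $c+\infty=\infty$; continuity on $[0,\infty]$ refers to the usual topology of the extended half-line. A grouping function is a map $G:[0,1]^2\to[0,1]$ that is (G1) commutative, (G2) $G(x,y)=0$ iff $x=y=0$, (G3) $G(x,y)=1$ iff $x=1$ or $y=1$, (G4) increasing in each variable, (G5) continuous. *)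

theory Defs
  imports "HOL-Analysis.Analysis" "HOL-Library.Extended_Nonnegative_Real"
begin

definition grouping_function :: "(real \<Rightarrow> real \<Rightarrow> real) \<Rightarrow> bool" where
  "grouping_function G \<longleftrightarrow>
     (\<forall>x\<in>{0..1}. \<forall>y\<in>{0..1}. G x y \<in> {0..1}) \<and>
     (\<forall>x\<in>{0..1}. \<forall>y\<in>{0..1}. G x y = G y x) \<and>
     (\<forall>x\<in>{0..1}. \<forall>y\<in>{0..1}. G x y = 0 \<longleftrightarrow> x = 0 \<and> y = 0) \<and>
     (\<forall>x\<in>{0..1}. \<forall>y\<in>{0..1}. G x y = 1 \<longleftrightarrow> x = 1 \<or> y = 1) \<and>
     (\<forall>x\<in>{0..1}. \<forall>x'\<in>{0..1}. \<forall>y\<in>{0..1}. x \<le> x' \<longrightarrow> G x y \<le> G x' y) \<and>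
     (\<forall>x\<in>{0..1}. \<forall>y\<in>{0..1}. \<forall>y'\<in>{0..1}. y \<le> y' \<longrightarrow> G x y \<le> G x y') \<and>
     continuous_on ({0..1} \<times> {0..1}) (\<lambda>(x, y). G x y)"

end

theory Submission
  imports Defs
begin

theorem proposition6p5:
  fixes a :: real and t :: "real \<Rightarrow> ennreal" and s :: "ennreal \<Rightarrow> real"
  assumes a_nonneg: "0 \<le> a"
    and t_cont: "continuous_on {0..1} t" and t_mono: "mono_on {0..1} t"
    and s_cont: "continuous_on UNIV s" and s_mono: "mono s"
    and s_range: "\<forall>u. s u \<in> {0..1}"
    and grouping: "grouping_function (\<lambda>x y. s (t x + t y))"
    and neutral: "\<forall>x\<in>{0..1}. s (t x + t 0) = x"
    and t_a: "\<forall>x\<in>{0..1}. t x = ennreal (a / 2) \<longleftrightarrow> x = 0"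
  shows "\<forall>x\<in>{0..1}. \<forall>y\<in>{0..1}. \<forall>z\<in>{0..1}.
           s (t (s (t x + t y)) + t z) = s (t x + t (s (t y + t z)))"
proof -
  define c where "c = t 0"
  have c_eq: "c = ennreal (a/2)" using t_a c_def by auto
  have c_fin: "c \<noteq> \<infinity>" using c_eq by simp
  have conn: "connected (t ` {0..1})"
    by (rule connected_continuous_image[OF t_cont]) simp
  have ivt: "\<exists>x\<in>{0..1}. t x = v" if "c \<le> v" "v \<le> t 1" for v
  proof -
    have "v \<in> t ` {0..1}"
      using connectedD_interval[OF conn, of c "t 1" v] that c_def by auto
    then show ?thesis by auto
  qed
  have G3: "\<forall>x\<in>{0..1}. \<forall>y\<in>{0..1}. s (t x + t y) = 1 \<longleftrightarrow> x = 1 \<or> y = 1"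
    using grouping unfolding grouping_function_def by blast
  have tge: "c \<le> t x" if "x \<in> {0..1}" for x
    using t_mono that unfolding c_def mono_on_def by auto
  have t1: "t 1 = \<infinity>"
  proof (rule ccontr)
    assume "t 1 \<noteq> \<infinity>"
    then obtain r where r: "t 1 = ennreal r" "0 \<le> r"
      by (metis ennreal_cases infinity_ennreal_def)
    have "t 1 \<noteq> c" using t_a c_eq by auto
    moreover have "c \<le> t 1" using tge by auto
    ultimately have ar: "a/2 < r" using r c_eq a_nonneg
      by (metis ennreal_leI le_less not_le)
    define v where "v = ennreal ((a/2 + r)/2)"
    have "c \<le> v" unfolding v_def c_eq by (rule ennreal_leI) (use ar in \<open>simp add: field_simps\<close>)
    moreover have "v \<le> t 1" unfolding v_def r(1) by (rule ennreal_leI) (use ar in \<open>simp add: field_simps\<close>)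
    ultimately obtain x where x: "x \<in> {0..1}" "t x = v" using ivt by blast
    have "x \<noteq> 1"
    proof
      assume "x = 1"
      hence "ennreal ((a/2 + r)/2) = ennreal r" using x r v_def by simp
      hence "(a/2 + r)/2 = r" using a_nonneg r(2) by (subst (asm) ennreal_inj) auto
      thus False using ar by simp
    qed
    moreover have "v + v = t 1 + t 0"
      unfolding v_def r c_def[symmetric] c_eq using ar a_nonneg
      by (simp add: ennreal_plus[symmetric] del: ennreal_plus)
    hence "s (t x + t x) = 1" using x neutral by auto
    ultimately show False using G3 x by auto
  qed
  have key: "\<exists>w\<in>{0..1}. t w + c = t x + t y \<and> s (t x + t y) = w"
    if x: "x \<in> {0..1}" and y: "y \<in> {0..1}" for x y
  proof -
    have le: "c \<le> t x + t y" using tge[OF x] by (metis add_increasing2 zero_le)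
    have m: "t x + c \<le> t x + t y" by (rule add_left_mono) (rule tge[OF y])
    have "t x + c - c \<le> t x + t y - c" by (rule ennreal_minus_mono[OF m]) simp
    moreover have "t x + c - c = t x" using c_fin by simp
    ultimately have "c \<le> t x + t y - c" using tge[OF x] by simp
    moreover have "t x + t y - c \<le> t 1" using t1 by simp
    ultimately obtain w where w: "w \<in> {0..1}" "t w = t x + t y - c" using ivt by blast
    have e: "t w + c = t x + t y" using w(2) le diff_add_cancel_ennreal by simp
    have "s (t w + c) = w" using neutral w(1) c_def by auto
    thus ?thesis using w e by auto
  qed
  show ?thesis
  proof (intro ballI)
    fix x y z :: real assume x: "x \<in> {0..1}" and y: "y \<in> {0..1}" and z: "z \<in> {0..1}"
    obtain w1 where w1: "w1 \<in> {0..1}" "t w1 + c = t x + t y" "s (t x + t y) = w1"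
      using key[OF x y] by blast
    obtain w2 where w2: "w2 \<in> {0..1}" "t w2 + c = t y + t z" "s (t y + t z) = w2"
      using key[OF y z] by blast
    have "c + (t w1 + t z) = c + (t x + t w2)"
      using w1(2) w2(2) by (metis add.assoc add.commute)
    hence "t w1 + t z = t x + t w2" using c_fin ennreal_add_left_cancel by blast
    thus "s (t (s (t x + t y)) + t z) = s (t x + t (s (t y + t z)))"
      using w1(3) w2(3) by simp
  qed
qed

end
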